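(* Let $A\subseteq\omega$ be an AP-set and let $f:\omega\to\omega$ be any function. Then there exists an AP-set $C\subseteq A$ such that either (1) $|f[C]|=1$, or (2) $f$ is finite-to-one on $C$, and if $\langle x_n\rangle_{n=0}^\infty$ enumerates $f[C]$ in increasing order, then $\lim_{n\to\infty}(x_{n+1}-x_n)=\infty$. In particular, in either case $f[C]$ is not an IP-set.
   Context: $\omega=\{0,1,2,\dots\}$. A set $A\subseteq\omega$ is an AP-set if it contains arithmetic progressions of every finite length. For $B\subseteq\omega$, $FS(B)$ denotes the set of all sums $\sum_{n\in F}n$ over nonempty finite subsets $F\subseteq B$. A set $A\subseteq\omega$ is an IP-set if there is an infinite $B\subseteq\omega$ with $FS(B)\subseteq A$. *)

theory Defs
  imports Main "HOL-Library.Infinite_Set"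
begin

definition AP_set :: "nat set \<Rightarrow> bool" where
  "AP_set A \<longleftrightarrow> (\<forall>k. \<exists>a d. d > 0 \<and> (\<forall>i<k. a + i * d \<in> A))"

definition FS :: "nat set \<Rightarrow> nat set" where
  "FS B = {\<Sum>F | F. F \<subseteq> B \<and> finite F \<and> F \<noteq> {}}"

definition IP_set :: "nat set \<Rightarrow> bool" where
  "IP_set A \<longleftrightarrow> (\<exists>B. infinite B \<and> FS B \<subseteq> A)"

definition finite_to_one_on :: "(nat \<Rightarrow> nat) \<Rightarrow> nat set \<Rightarrow> bool" where
  "finite_to_one_on f C \<longleftrightarrow> (\<forall>y. finite {x \<in> C. f x = y})"

end

theory Submission
  imports Defs "HOL-Library.Countable"
begin

definition mono_ap :: "(nat \<Rightarrow> nat) \<Rightarrow> nat \<Rightarrow> nat \<Rightarrow> bool" where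
  "mono_ap c L N \<longleftrightarrow> (\<exists>a d. 0 < d \<and> d \<le> N \<and> (\<forall>j<L. a + j*d < N \<and> c (a + j*d) = c a))"

definition focused :: "(nat \<Rightarrow> nat) \<Rightarrow> nat \<Rightarrow> nat \<Rightarrow> nat \<Rightarrow> bool" where
  "focused c k N s \<longleftrightarrow> (\<exists>f a d col. f < N \<and> inj_on col {..<s} \<and>
     (\<forall>i<s. 0 < d i \<and> a i + k * d i = f \<and> (\<forall>j<k. c (a i + j * d i) = col i)))"

lemma mono_ap_shift:
  assumes "mono_ap (\<lambda>x. c (t + x)) L n" "t + n \<le> N"
  shows "mono_ap c L N"
proof -
  from assms(1) obtain a d where "0<d" "d \<le> n"
    and H: "\<forall>j<L. a + j*d < n \<and> c (t + (a + j*d)) = c (t + a)"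
    unfolding mono_ap_def by blast
  show ?thesis unfolding mono_ap_def
    apply (rule exI[of _ "t+a"], rule exI[of _ d])
    using H \<open>0<d\<close> \<open>d\<le>n\<close> assms(2) by (auto simp: add.assoc)
qed

lemma Q_step:
  fixes R :: "nat set" and k :: nat
  assumes k: "1 \<le> k" and fin: "finite R"
    and IH: "\<And>R'::nat set. finite R' \<Longrightarrow> \<exists>N. \<forall>c. (\<forall>x<N. c x \<in> R') \<longrightarrow> mono_ap c k N"
  shows "\<exists>N. \<forall>c. (\<forall>x<N. c x \<in> R) \<longrightarrow> mono_ap c (Suc k) N \<or> focused c k N s"
proof (induction s)
  case 0
  show ?case
    apply (rule exI[of _ 1], intro allI impI disjI2)
    unfolding focused_def by (rule exI[of _ 0]) auto
next
  case (Suc s)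
  then obtain n where Hn: "\<forall>c. (\<forall>x<n. c x \<in> R) \<longrightarrow> mono_ap c (Suc k) n \<or> focused c k n s"
    by blast
  define LR where "LR = {xs. set xs \<subseteq> R \<and> length xs = n}"
  have "finite LR" unfolding LR_def using fin by (rule finite_lists_length_eq)
  then obtain M where HM: "\<forall>c. (\<forall>x<M. c x \<in> to_nat ` LR) \<longrightarrow> mono_ap c k M"
    using IH[of "to_nat ` LR"] by blast
  show ?case
  proof (rule exI[of _ "2*M*n"], intro allI impI)
    fix c assume cR: "\<forall>x<2*M*n. c x \<in> R"
    have blkin: "t*n+i < 2*M*n" if "t < M" "i < n" for t i
    proof -
      have "t*n + i < t*n + n" using \<open>i<n\<close> by simp
      also have "\<dots> = (t+1)*n" by simp
      also have "\<dots> \<le> M*n" using \<open>t<M\<close> by (intro mult_right_mono) auto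
      also have "\<dots> \<le> 2*M*n" by simp
      finally show "t*n+i < 2*M*n" .
    qed
    define bc where "bc = (\<lambda>t. to_nat (map (\<lambda>i. c (t*n+i)) [0..<n]))"
    have "\<forall>t<M. bc t \<in> to_nat ` LR"
    proof (intro allI impI)
      fix t assume "t < M"
      then have "map (\<lambda>i. c (t*n+i)) [0..<n] \<in> LR" unfolding LR_def using cR blkin by auto
      then show "bc t \<in> to_nat ` LR" unfolding bc_def by blast
    qed
    then have "mono_ap bc k M" using HM by blast
    then obtain b e where e0: "0<e" and eM: "e \<le> M"
      and Hb: "\<forall>j<k. b + j*e < M \<and> bc (b+j*e) = bc b"
      unfolding mono_ap_def by blast
    have same: "c ((b+j*e)*n + x) = c (b*n + x)" if "j<k" "x<n" for j x
    proof -
      have "bc (b+j*e) = bc b" using Hb that by blast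
      then have "map (\<lambda>i. c ((b+j*e)*n+i)) [0..<n] = map (\<lambda>i. c (b*n+i)) [0..<n]"
        unfolding bc_def by simp
      then show ?thesis using \<open>x<n\<close> by (simp add: map_eq_conv)
    qed
    have bM: "b < M" using Hb k by (metis add_0_right mult_zero_left not_one_le_zero not_gr0)
    have bkM: "b + k*e < 2*M"
    proof -
      have "b + (k-1)*e < M" using Hb k by simp
      moreover have "k*e = (k-1)*e + e" using k by (cases k) auto
      ultimately show ?thesis using eM by linarith
    qed
    define c' where "c' = (\<lambda>x. c (b*n + x))"
    have c'R: "\<forall>x<n. c' x \<in> R" unfolding c'_def using cR blkin bM by auto
    have bn: "b*n + n \<le> 2*M*n"
    proof -
      have "b*n + n = (b+1)*n" by simp
      also have "\<dots> \<le> 2*M*n" using bM by (intro mult_right_mono) auto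
      finally show ?thesis .
    qed
    have shift: "mono_ap c (Suc k) (2*M*n)" if "mono_ap c' (Suc k) n"
      using mono_ap_shift[of c "b*n" "Suc k" n "2*M*n"] that bn unfolding c'_def by blast
    from Hn c'R have "mono_ap c' (Suc k) n \<or> focused c' k n s" by blast
    then show "mono_ap c (Suc k) (2*M*n) \<or> focused c k (2*M*n) (Suc s)"
    proof
      assume "mono_ap c' (Suc k) n" then show ?thesis using shift by blast
    next
      assume "focused c' k n s"
      then obtain f a d col where fn: "f<n" and inj: "inj_on col {..<s}"
        and H: "\<forall>i<s. 0 < d i \<and> a i + k * d i = f \<and> (\<forall>j<k. c' (a i + j * d i) = col i)"
        unfolding focused_def by blast
      have ptn: "a i + j * d i < n" if "i<s" "j\<le>k" for i j
      proof -
        have "j * d i \<le> k * d i" using that by simp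
        then show ?thesis using H that fn by (metis add_le_cancel_left le_less_trans)
      qed
      have c0: "c' (a i) = col i" if "i<s" for i
        using H that k by (metis add_0_right mult_zero_left not_one_le_zero not_gr0)
      show ?thesis
      proof (cases "\<exists>i<s. c' f = col i")
        case True
        then obtain i where i: "i<s" "c' f = col i" by blast
        have "mono_ap c' (Suc k) n" unfolding mono_ap_def
        proof (intro exI conjI allI impI)
          show "0 < d i" using H i by blast
          have "d i \<le> k * d i" using k by simp
          then show "d i \<le> n" using H i fn by (metis le_add2 le_trans less_imp_le)
          fix j assume j: "j < Suc k"
          show "a i + j * d i < n" using ptn i j by simp
          show "c' (a i + j * d i) = c' (a i)"
          proof (cases "j < k")
            case True then show ?thesis using H i c0 by simp
          next
            case False then have "j = k" using j by simp
            then show ?thesis using H i c0 by simp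
          qed
        qed
        then show ?thesis using shift by blast
      next
        case False
        have "focused c k (2*M*n) (Suc s)" unfolding focused_def
        proof (rule exI[of _ "b*n + f + k*(e*n)"],
            rule exI[of _ "\<lambda>i. if i<s then b*n + a i else b*n+f"],
            rule exI[of _ "\<lambda>i. if i<s then d i + e*n else e*n"],
            rule exI[of _ "\<lambda>i. if i<s then col i else c' f"], intro conjI allI impI)
          have "b*n + f + k*(e*n) = (b + k*e)*n + f" by (simp add: algebra_simps)
          also have "\<dots> < (b+k*e)*n + n" using fn by simp
          also have "\<dots> = (b+k*e+1)*n" by simp
          also have "\<dots> \<le> 2*M*n" using bkM by (intro mult_right_mono) auto
          finally show "b*n + f + k*(e*n) < 2*M*n" .
          have "{..<Suc s} = insert s {..<s}" by auto
          moreover have "inj_on (\<lambda>i. if i<s then col i else c' f) {..<s}"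
            using inj by (simp add: inj_on_def)
          moreover have "c' f \<notin> (\<lambda>i. if i<s then col i else c' f) ` {..<s}"
            using False by auto
          ultimately show "inj_on (\<lambda>i. if i<s then col i else c' f) {..<Suc s}"
            by simp
          fix i assume i: "i < Suc s"
          show "0 < (if i<s then d i + e*n else e*n)"
          proof -
            have "n > 0" using fn by simp
            then show ?thesis using e0 by simp
          qed
          show "(if i<s then b*n + a i else b*n+f) + k * (if i<s then d i + e*n else e*n)
              = b*n + f + k*(e*n)"
            using H by (auto simp: algebra_simps)
          fix j assume j: "j < k"
          show "c ((if i<s then b*n + a i else b*n+f) + j * (if i<s then d i + e*n else e*n))
              = (if i<s then col i else c' f)"
          proof (cases "i < s")
            case True
            have "c (b*n + a i + j * (d i + e*n)) = c ((b + j*e)*n + (a i + j*d i))"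
              by (rule arg_cong[where f=c]) (simp add: algebra_simps)
            also have "\<dots> = c' (a i + j * d i)"
              unfolding c'_def using same j ptn True by simp
            also have "\<dots> = col i" using H True j by blast
            finally show ?thesis using True by simp
          next
            case False
            have "c (b*n + f + j * (e*n)) = c ((b + j*e)*n + f)"
              by (rule arg_cong[where f=c]) (simp add: algebra_simps)
            then show ?thesis using False same[OF j fn] unfolding c'_def by simp
          qed
        qed
        then show ?thesis by blast
      qed
    qed
  qed
qed


lemma vdw: "finite R \<Longrightarrow> \<exists>N. \<forall>c. (\<forall>x<N. c x \<in> R) \<longrightarrow> mono_ap c L N"
proof (induction L arbitrary: R)
  case 0
  show ?case by (rule exI[of _ 1]) (auto simp: mono_ap_def)
next
  case (Suc k)
  show ?case
  proof (cases "k = 0 \<or> R = {}")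
    case True
    show ?thesis
    proof (rule exI[of _ 1], intro allI impI)
      fix c :: "nat \<Rightarrow> nat" assume cR: "\<forall>x<1. c x \<in> R"
      have "c 0 \<in> R" using cR by simp
      then have "k = 0" using True by auto
      then show "mono_ap c (Suc k) 1" unfolding mono_ap_def
        by (intro exI[of _ 0] exI[of _ 1]) auto
    qed
  next
    case False
    then have k: "1 \<le> k" and ne: "R \<noteq> {}" by auto
    obtain N where HN: "\<forall>c. (\<forall>x<N. c x \<in> R) \<longrightarrow> mono_ap c (Suc k) N \<or> focused c k N (card R)"
      using Q_step[OF k Suc.prems Suc.IH] by blast
    show ?thesis
    proof (rule exI[of _ N], intro allI impI)
      fix c assume cR: "\<forall>x<N. c x \<in> R"
      then have "mono_ap c (Suc k) N \<or> focused c k N (card R)" using HN by blast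
      then show "mono_ap c (Suc k) N"
      proof
        assume "focused c k N (card R)"
        then obtain f a d col where fn: "f<N" and inj: "inj_on col {..<card R}"
          and H: "\<forall>i<card R. 0 < d i \<and> a i + k * d i = f \<and> (\<forall>j<k. c (a i + j * d i) = col i)"
          unfolding focused_def by blast
        have c0: "c (a i) = col i" if "i<card R" for i
          using H that k by (metis add_0_right mult_zero_left not_one_le_zero not_gr0)
        have "col ` {..<card R} \<subseteq> R"
        proof
          fix y assume "y \<in> col ` {..<card R}"
          then obtain i where i: "i < card R" "y = col i" by auto
          have "a i \<le> f" using H i by (metis le_add1)
          then show "y \<in> R" using cR fn c0 i by (metis le_less_trans)
        qed
        moreover have "card (col ` {..<card R}) = card R" using inj by (simp add: card_image)
        ultimately have "col ` {..<card R} = R" using Suc.prems by (simp add: card_subset_eq)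
        moreover have "c f \<in> R" using cR fn by blast
        ultimately obtain i where i: "i < card R" "col i = c f" by (metis imageE lessThan_iff)
        show "mono_ap c (Suc k) N" unfolding mono_ap_def
        proof (intro exI conjI allI impI)
          show "0 < d i" using H i by blast
          have "d i \<le> k * d i" using k by simp
          then show "d i \<le> N" using H i fn by (metis le_add2 le_trans less_imp_le)
          fix j assume j: "j < Suc k"
          have "j * d i \<le> k * d i" using j by simp
          then show "a i + j * d i < N" using H i fn by (metis add_le_cancel_left le_less_trans)
          show "c (a i + j * d i) = c (a i)"
          proof (cases "j < k")
            case True then show ?thesis using H i c0 by simp
          next
            case False then have "j = k" using j by simp
            then show ?thesis using H i c0 by simp
          qed
        qed
      qed
    qed
  qed
qed

definition hasAP :: "nat set \<Rightarrow> nat \<Rightarrow> bool" where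
  "hasAP X L \<longleftrightarrow> (\<exists>a d. 0 < d \<and> (\<forall>i<L. a + i*d \<in> X))"

lemma AP_set_hasAP: "AP_set X \<longleftrightarrow> (\<forall>L. hasAP X L)"
  unfolding AP_set_def hasAP_def by blast

lemma hasAP_mono: "hasAP X L \<Longrightarrow> L' \<le> L \<Longrightarrow> hasAP X L'"
  unfolding hasAP_def by (metis order_less_le_trans)

lemma partition_AP:
  fixes g :: "nat \<Rightarrow> nat"
  assumes A: "AP_set A" and fin: "finite R" and g: "\<forall>x\<in>A. g x \<in> R"
  shows "\<exists>v\<in>R. AP_set (A \<inter> g -` {v})"
proof -
  have each: "\<exists>v\<in>R. hasAP (A \<inter> g -` {v}) L" for L
  proof -
    obtain N where HN: "\<forall>c. (\<forall>x<N. c x \<in> R) \<longrightarrow> mono_ap c (Suc L) N"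
      using vdw[OF fin] by blast
    have "\<exists>a d. 0<d \<and> (\<forall>i<N. a+i*d \<in> A)"
      using A unfolding AP_set_def by (rule spec)
    then obtain a d where d: "0<d" and ad: "\<forall>i<N. a+i*d \<in> A" by blast
    have "\<forall>x<N. g (a + x*d) \<in> R" using ad g by blast
    then have "mono_ap (\<lambda>i. g (a + i*d)) (Suc L) N" using HN[rule_format, of "\<lambda>i. g (a + i*d)"] by simp
    then obtain a' d' where d': "0 < d'" and H: "\<forall>j<Suc L. a' + j*d' < N \<and> g (a + (a' + j*d')*d) = g (a + a'*d)"
      unfolding mono_ap_def by blast
    have "a' + 0*d' < N" using H by blast
    then have "a' < N" by simp
    then have vR: "g (a + a'*d) \<in> R" using ad g by blast
    have "hasAP (A \<inter> g -` {g (a + a'*d)}) L" unfolding hasAP_def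
    proof (intro exI conjI allI impI)
      show "0 < d'*d" using d d' by simp
      fix i assume i: "i < L"
      have eq: "a + a'*d + i*(d'*d) = a + (a' + i*d')*d" by (simp add: algebra_simps)
      have "i < Suc L" using i by simp
      then have "a' + i*d' < N" and "g (a + (a' + i*d')*d) = g (a + a'*d)" using H by blast+
      then show "a + a'*d + i*(d'*d) \<in> A \<inter> g -` {g (a + a'*d)}"
        unfolding eq using ad by blast
    qed
    then show ?thesis using vR by blast
  qed
  show ?thesis
  proof (rule ccontr)
    assume "\<not> ?thesis"
    then have "\<forall>v\<in>R. \<exists>L. \<not> hasAP (A \<inter> g -` {v}) L" unfolding AP_set_hasAP by blast
    then obtain Lf where Lf: "\<forall>v\<in>R. \<not> hasAP (A \<inter> g -` {v}) (Lf v)" by (rule bchoice[elim_format]) blast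
    define L where "L = Max (insert 0 (Lf ` R))"
    obtain v where v: "v \<in> R" "hasAP (A \<inter> g -` {v}) L" using each[of L] by blast
    have "Lf v \<le> L" unfolding L_def using fin v by simp
    then have "hasAP (A \<inter> g -` {v}) (Lf v)" using hasAP_mono v(2) by blast
    then show False using v(1) Lf by blast
  qed
qed


definition sparse :: "nat set \<Rightarrow> bool" where
  "sparse S \<longleftrightarrow> (\<forall>b. \<exists>N. \<forall>x\<in>S. \<forall>y\<in>S. N \<le> x \<longrightarrow> x < y \<longrightarrow> x + b < y)"

lemma FS_single: "x \<in> B \<Longrightarrow> x \<in> FS B"
  unfolding FS_def by (rule CollectI, rule exI[of _ "{x}"]) auto

lemma FS_pair: "x \<in> B \<Longrightarrow> y \<in> B \<Longrightarrow> x \<noteq> y \<Longrightarrow> x + y \<in> FS B"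
  unfolding FS_def by (rule CollectI, rule exI[of _ "{x,y}"]) auto

lemma finite_not_IP: "finite S \<Longrightarrow> \<not> IP_set S"
proof
  assume fin: "finite S" and "IP_set S"
  then obtain B where inf: "infinite B" and sub: "FS B \<subseteq> S" unfolding IP_set_def by blast
  have "B \<subseteq> S" using sub FS_single by blast
  then show False using fin inf finite_subset by blast
qed

lemma sparse_not_IP: "sparse S \<Longrightarrow> \<not> IP_set S"
proof
  assume sp: "sparse S" and "IP_set S"
  then obtain B where inf: "infinite B" and sub: "FS B \<subseteq> S" unfolding IP_set_def by blast
  have "infinite (B - {0})" using inf by simp
  then obtain b where b: "b \<in> B" "b \<noteq> 0" by (metis Diff_iff ex_in_conv finite.emptyI insertI1)
  obtain N where HN: "\<forall>x\<in>S. \<forall>y\<in>S. N \<le> x \<longrightarrow> x < y \<longrightarrow> x + b < y"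
    using sp unfolding sparse_def by blast
  obtain x where x: "x > N + b" "x \<in> B" using inf unfolding infinite_nat_iff_unbounded by blast
  have "x \<in> S" using x FS_single sub by blast
  moreover have "x + b \<in> S" using x b FS_pair[of x B b] sub by auto
  moreover have "N \<le> x" using x by simp
  moreover have "x < x + b" using b by simp
  ultimately have "x + b < x + b" using HN by blast
  then show False by simp
qed

lemma sparse_lim:
  assumes sp: "sparse S" and inf: "infinite S"
  shows "filterlim (\<lambda>n. enumerate S (Suc n) - enumerate S n) at_top sequentially"
  unfolding filterlim_at_top
proof
  fix Z
  obtain N where HN: "\<forall>x\<in>S. \<forall>y\<in>S. N \<le> x \<longrightarrow> x < y \<longrightarrow> x + Z < y"
    using sp unfolding sparse_def by blast
  show "\<forall>\<^sub>F n in sequentially. Z \<le> enumerate S (Suc n) - enumerate S n"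
    unfolding eventually_sequentially
  proof (intro exI[of _ N] allI impI)
    fix n assume "N \<le> n"
    moreover have "n \<le> enumerate S n"
    proof (induction n)
      case (Suc n)
      have "enumerate S n < enumerate S (Suc n)" using enumerate_mono inf by simp
      then show ?case using Suc by simp
    qed simp
    moreover have "enumerate S n < enumerate S (Suc n)" using enumerate_mono inf by simp
    moreover have "enumerate S n \<in> S" "enumerate S (Suc n) \<in> S" using enumerate_in_set inf by auto
    ultimately have "enumerate S n + Z < enumerate S (Suc n)" using HN by auto
    then show "Z \<le> enumerate S (Suc n) - enumerate S n" by simp
  qed
qed

lemma mod_gap:
  fixes x y m :: nat
  assumes "x mod m = y mod m" "x < y" "0 < m"
  shows "x + m \<le> y"
proof -
  have "m dvd y - x" using mod_eq_dvd_iff_nat[of x y m] assms by simp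
  moreover have "0 < y - x" using assms by simp
  ultimately have "m \<le> y - x" by (rule dvd_imp_le)
  then show ?thesis using assms by simp
qed

locale cons2 =
  fixes A :: "nat set" and f :: "nat \<Rightarrow> nat"
  assumes apA: "AP_set A" and no1: "\<And>v. \<not> AP_set (A \<inter> f -` {v})"
begin

lemma good_exists:
  assumes "0 < g"
  shows "\<exists>a d r. 0<d \<and> (\<forall>i<L. a+i*d \<in> A \<and> M < f (a+i*d) \<and> f (a+i*d) mod g = r)"
proof -
  define h where "h = (\<lambda>x. if f x \<le> M then f x else M + 1 + f x mod g)"
  have hR: "\<forall>x\<in>A. h x \<in> {..<M+1+g}" unfolding h_def using assms by auto
  obtain v where v: "v \<in> {..<M+1+g}" "AP_set (A \<inter> h -` {v})"
    using partition_AP[OF apA _ hR] by blast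
  have vM: "M < v"
  proof (rule ccontr)
    assume "\<not> M < v" then have "v \<le> M" by simp
    then have "A \<inter> h -` {v} = A \<inter> f -` {v}" unfolding h_def by auto
    then show False using v(2) no1 by simp
  qed
  have "\<exists>a d. 0<d \<and> (\<forall>i<L. a+i*d \<in> A \<inter> h -` {v})"
    using v(2) unfolding AP_set_def by (rule spec)
  then obtain a d where "0<d" and H: "\<forall>i<L. a+i*d \<in> A \<inter> h -` {v}" by blast
  have "\<forall>i<L. a+i*d \<in> A \<and> M < f (a+i*d) \<and> f (a+i*d) mod g = v - (M+1)"
  proof (intro allI impI)
    fix i assume "i<L"
    then have "a+i*d \<in> A" "h (a+i*d) = v" using H by auto
    then show "a+i*d \<in> A \<and> M < f (a+i*d) \<and> f (a+i*d) mod g = v - (M+1)"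
      using vM unfolding h_def by (auto split: if_splits)
  qed
  then show ?thesis using \<open>0<d\<close> by blast
qed

definition pick :: "nat \<Rightarrow> nat \<Rightarrow> nat \<times> nat" where
  "pick M k = (SOME p. 0 < snd p \<and> (\<exists>r. \<forall>i<k. fst p + i*snd p \<in> A \<and> M < f (fst p + i*snd p)
      \<and> f (fst p + i*snd p) mod (Suc k) = r))"

lemma pick_spec: "0 < snd (pick M k) \<and> (\<exists>r. \<forall>i<k. fst (pick M k) + i*snd (pick M k) \<in> A
   \<and> M < f (fst (pick M k) + i*snd (pick M k)) \<and> f (fst (pick M k) + i*snd (pick M k)) mod (Suc k) = r)"
proof -
  obtain a d r where "0<d" "\<forall>i<k. a+i*d \<in> A \<and> M < f (a+i*d) \<and> f (a+i*d) mod (Suc k) = r"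
    using good_exists[of "Suc k" k M] by auto
  then have "\<exists>p. 0 < snd p \<and> (\<exists>r. \<forall>i<k. fst p + i*snd p \<in> A \<and> M < f (fst p + i*snd p)
      \<and> f (fst p + i*snd p) mod (Suc k) = r)" by (intro exI[of _ "(a,d)"]) auto
  then show ?thesis unfolding pick_def by (rule someI_ex)
qed

definition blk :: "nat \<Rightarrow> nat \<Rightarrow> nat set" where
  "blk M k = (\<lambda>i. fst (pick M k) + i * snd (pick M k)) ` {..<k}"

primrec bnd :: "nat \<Rightarrow> nat" where
  "bnd 0 = 0"
| "bnd (Suc k) = bnd k + Suc k + Max (insert 0 (f ` blk (bnd k) k))"

definition B :: "nat \<Rightarrow> nat set" where "B k = blk (bnd k) k"

lemma B_fin: "finite (B k)" unfolding B_def blk_def by simp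

lemma B_props:
  assumes "x \<in> B k" shows "x \<in> A" "bnd k < f x"
  using pick_spec[of "bnd k" k] assms unfolding B_def blk_def by auto

lemma B_mod:
  assumes "x \<in> B k" "y \<in> B k" shows "f x mod Suc k = f y mod Suc k"
proof -
  obtain r where "\<forall>i<k. f (fst (pick (bnd k) k) + i*snd (pick (bnd k) k)) mod (Suc k) = r"
    using pick_spec[of "bnd k" k] by blast
  then show ?thesis using assms unfolding B_def blk_def by auto
qed

lemma B_le:
  assumes "x \<in> B k" shows "f x + Suc k \<le> bnd (Suc k)"
proof -
  have "f x \<le> Max (insert 0 (f ` B k))" using B_fin assms by (intro Max_ge) auto
  then show ?thesis unfolding B_def by simp
qed

lemma bnd_mono: "j \<le> k \<Longrightarrow> bnd j \<le> bnd k"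
  by (rule lift_Suc_mono_le[of bnd]) auto

lemma bnd_ge: "k \<le> bnd k" by (induction k) auto

lemma B_ap: "hasAP (B k) k"
  unfolding hasAP_def B_def blk_def using pick_spec[of "bnd k" k] by blast

definition C :: "nat set" where "C = (\<Union>k. B k)"

lemma C_AP: "AP_set C"
  unfolding AP_set_hasAP
proof
  fix L
  have "B L \<subseteq> C" unfolding C_def by blast
  then show "hasAP C L" using B_ap[of L] unfolding hasAP_def by blast
qed

lemma C_A: "C \<subseteq> A" unfolding C_def using B_props by blast

lemma sparse_fC: "sparse (f ` C)"
  unfolding sparse_def
proof
  fix b
  show "\<exists>N. \<forall>x\<in>f ` C. \<forall>y\<in>f ` C. N \<le> x \<longrightarrow> x < y \<longrightarrow> x + b < y"
  proof (rule exI[of _ "bnd b"], intro ballI impI)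
    fix x y assume x: "x \<in> f ` C" and y: "y \<in> f ` C" and N: "bnd b \<le> x" and xy: "x < y"
    obtain u k where u: "u \<in> B k" "x = f u" using x unfolding C_def by blast
    obtain w k' where w: "w \<in> B k'" "y = f w" using y unfolding C_def by blast
    have kb: "b \<le> k"
    proof (rule ccontr)
      assume "\<not> b \<le> k" then have "Suc k \<le> b" by simp
      then have "bnd (Suc k) \<le> bnd b" by (rule bnd_mono)
      then show False using B_le[OF u(1)] N u(2) by simp
    qed
    consider "k' < k" | "k' = k" | "k < k'" by linarith
    then show "x + b < y"
    proof cases
      case 1
      then have "bnd (Suc k') \<le> bnd k" by (intro bnd_mono) simp
      then show ?thesis using B_le[OF w(1)] B_props(2)[OF u(1)] u w xy by simp
    next
      case 2
      have "x + Suc k \<le> y" using mod_gap[of x "Suc k" y] B_mod[of u k w] u w xy 2 by simp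
      then show ?thesis using kb by simp
    next
      case 3
      then have "bnd (Suc k) \<le> bnd k'" by (intro bnd_mono) simp
      then show ?thesis using B_le[OF u(1)] B_props(2)[OF w(1)] u w kb by simp
    qed
  qed
qed

lemma fC_inf: "infinite (f ` C)"
  unfolding infinite_nat_iff_unbounded
proof
  fix m
  have "fst (pick (bnd (Suc m)) (Suc m)) + 0 * snd (pick (bnd (Suc m)) (Suc m)) \<in> B (Suc m)"
    unfolding B_def blk_def by blast
  then obtain x where x: "x \<in> B (Suc m)" by blast
  then have "bnd (Suc m) < f x" by (rule B_props)
  moreover have "Suc m \<le> bnd (Suc m)" by (rule bnd_ge)
  moreover have "f x \<in> f ` C" using x unfolding C_def by blast
  ultimately show "\<exists>n>m. n \<in> f ` C" by (intro exI[of _ "f x"]) simp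
qed

lemma fC_fto: "finite_to_one_on f C"
  unfolding finite_to_one_on_def
proof
  fix y
  have "{x \<in> C. f x = y} \<subseteq> (\<Union>k<y. B k)"
  proof
    fix x assume "x \<in> {x \<in> C. f x = y}"
    then obtain k where "x \<in> B k" "f x = y" unfolding C_def by blast
    moreover then have "k < y" using B_props(2)[of x k] bnd_ge[of k] by simp
    ultimately show "x \<in> (\<Union>k<y. B k)" by blast
  qed
  moreover have "finite (\<Union>k<y. B k)" using B_fin by simp
  ultimately show "finite {x \<in> C. f x = y}" by (rule finite_subset)
qed

end

theorem lemma1p1:
  fixes A :: "nat set" and f :: "nat \<Rightarrow> nat"
  assumes "AP_set A"
  shows "\<exists>C. AP_set C \<and> C \<subseteq> A \<and>
           (card (f ` C) = 1 \<or>
            (finite_to_one_on f C \<and>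
             filterlim (\<lambda>n. Infinite_Set.enumerate (f ` C) (Suc n) - Infinite_Set.enumerate (f ` C) n)
                       at_top sequentially)) \<and>
           \<not> IP_set (f ` C)"
proof (cases "\<exists>v. AP_set (A \<inter> f -` {v})")
  case True
  then obtain v where v: "AP_set (A \<inter> f -` {v})" by blast
  have "hasAP (A \<inter> f -` {v}) 1" using v unfolding AP_set_hasAP by blast
  then obtain a where "a \<in> A \<inter> f -` {v}" unfolding hasAP_def by force
  then have img: "f ` (A \<inter> f -` {v}) = {v}" by auto
  show ?thesis
    apply (rule exI[of _ "A \<inter> f -` {v}"])
    using v img finite_not_IP[of "{v}"] by auto
next
  case False
  interpret cons2 A f using assms False by unfold_locales auto
  show ?thesis
    apply (rule exI[of _ C])
    using C_AP C_A fC_fto sparse_lim[OF sparse_fC fC_inf] sparse_not_IP[OF sparse_fC] by auto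
qed

end
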